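(* Let $n\ge 0$ be an integer, let $\mathcal{L}=(\mathcal{L}_i)_{i\in\mathbb{N}}$ be a sequence of classes of finite (weighted or unweighted) graphs with $\mathcal{L}_0\subseteq\mathcal{L}_1\subseteq\cdots$, each of asymptotic dimension at most $n$, and let $\mathcal{C}$ be an $\mathcal{L}$-layerable class of finite (weighted or unweighted) graphs. Then $\mathcal{C}$ has asymptotic dimension at most $n+1$. Furthermore, let $a,b,c\ge 1$ and $d\ge 0$ be constants and assume that $\mathcal{C}$ is $c$-linearly $\mathcal{L}$-layerable and that, for every $i$, the class $\mathcal{L}_i$ has an $n$-dimensional control function $D_i$ with $D_i(r)\le ar+bi+d$ for all $r>0$. Then $\mathcal{C}$ has asymptotic dimension at most $n+1$ of linear type. If moreover $d=0$, then $\mathcal{C}$ has Assouad–Nagata dimension at most $n+1$, with an $(n+1)$-dimensional control function $D_{\mathcal C}$ satisfying $D_{\mathcal C}(r)\le 20\big(6(a+2bc)^2+(a+2bc)bc(n+4)\big)\, r$ for all $r>0$.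
   Context: A weighted graph has positive real edge weights and is a metric space on its vertices with the weighted shortest-path distance $d_G$ (infinite between components); unweighted graphs have all weights 1. An induced subgraph $H$ of $G$ inherits the weights and is considered with its own (intrinsic) shortest-path metric $d_H$. A real projection of $G$ is a map $L:V(G)\to\mathbb{R}$ with $|L(x)-L(y)|\le d_G(x,y)$ for all $x,y$. A set $A\subseteq V(G)$ is $(\infty,S)$-bounded with respect to $L$ if $|L(x)-L(y)|\le S$ for all $x,y\in A$. The class $\mathcal{C}$ is $\mathcal{L}$-layerable if there is a function $f:\mathbb{R}^+\to\mathbb{N}$ such that every $G\in\mathcal{C}$ has a real projection $L$ such that for every $S>0$, every $(\infty,S)$-bounded set of $G$ induces a graph in $\mathcal{L}_{f(S)}$; it is $c$-linearly $\mathcal{L}$-layerable if moreover $f(S)\le cS$ for all $S>0$. For a metric space $(X,d)$, a family $\mathcal U$ of subsets is $D$-bounded if every member has diameter at most $D$, and $r$-disjoint if points in different members are at distance $>r$. A function $D:\mathbb{R}^+\to\mathbb{R}^+$ is an $n$-dimensional control function for $X$ (or for a class, if it works for every member) if for every $r>0$ there is a cover $\mathcal U=\mathcal U_1\cup\dots\cup\mathcal U_{n+1}$ of $X$ with each $\mathcal U_i$ $r$-disjoint and each member $D(r)$-bounded. A class has asymptotic dimension at most $n$ if it has an $n$-dimensional control function; of linear type if it has one with $D(r)\le c'r+c'$ for a constant $c'$; and Assouad–Nagata dimension at most $n$ if it has one with $D(r)\le c'r$. *)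

theory Defs
  imports "HOL-Library.Extended_Real"
begin

text \<open>Finite weighted graphs: vertex set, symmetric edge set, weights on edges.
Unweighted graphs are the special case where every edge has weight 1.\<close>

record 'v wgraph =
  verts :: "'v set"
  edges :: "('v \<times> 'v) set"
  weight :: "'v \<Rightarrow> 'v \<Rightarrow> real"

definition finite_wgraph :: "'v wgraph \<Rightarrow> bool" where
  "finite_wgraph G \<longleftrightarrow> finite (verts G) \<and> edges G \<subseteq> verts G \<times> verts G \<and> sym (edges G) \<and>
     (\<forall>(x,y)\<in>edges G. x \<noteq> y \<and> weight G x y > 0 \<and> weight G x y = weight G y x)"

definition walk :: "'v wgraph \<Rightarrow> 'v list \<Rightarrow> bool" where
  "walk G xs \<longleftrightarrow> xs \<noteq> [] \<and> set xs \<subseteq> verts G \<and>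
     (\<forall>i. Suc i < length xs \<longrightarrow> (xs ! i, xs ! Suc i) \<in> edges G)"

definition walk_len :: "'v wgraph \<Rightarrow> 'v list \<Rightarrow> real" where
  "walk_len G xs = sum_list (map (\<lambda>(a,b). weight G a b) (zip xs (tl xs)))"

text \<open>Weighted shortest-path distance (infinite between components).\<close>
definition gdist :: "'v wgraph \<Rightarrow> 'v \<Rightarrow> 'v \<Rightarrow> ereal" where
  "gdist G x y = Inf {ereal (walk_len G xs) | xs. walk G xs \<and> hd xs = x \<and> last xs = y}"

definition induced :: "'v wgraph \<Rightarrow> 'v set \<Rightarrow> 'v wgraph" where
  "induced G A = \<lparr>verts = verts G \<inter> A, edges = edges G \<inter> (A \<times> A), weight = weight G\<rparr>"

definition real_projection :: "'v wgraph \<Rightarrow> ('v \<Rightarrow> real) \<Rightarrow> bool" where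
  "real_projection G L \<longleftrightarrow> (\<forall>x\<in>verts G. \<forall>y\<in>verts G. ereal \<bar>L x - L y\<bar> \<le> gdist G x y)"

definition inf_S_bounded :: "'v wgraph \<Rightarrow> ('v \<Rightarrow> real) \<Rightarrow> real \<Rightarrow> 'v set \<Rightarrow> bool" where
  "inf_S_bounded G L S A \<longleftrightarrow> A \<subseteq> verts G \<and> (\<forall>x\<in>A. \<forall>y\<in>A. \<bar>L x - L y\<bar> \<le> S)"

definition layerable_with :: "'v wgraph set \<Rightarrow> (nat \<Rightarrow> 'v wgraph set) \<Rightarrow> (real \<Rightarrow> nat) \<Rightarrow> bool" where
  "layerable_with C Ls f \<longleftrightarrow> (\<forall>G\<in>C. \<exists>L. real_projection G L \<and>
     (\<forall>S>0. \<forall>A. inf_S_bounded G L S A \<longrightarrow> induced G A \<in> Ls (f S)))"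

definition layerable :: "'v wgraph set \<Rightarrow> (nat \<Rightarrow> 'v wgraph set) \<Rightarrow> bool" where
  "layerable C Ls \<longleftrightarrow> (\<exists>f. layerable_with C Ls f)"

definition linearly_layerable :: "real \<Rightarrow> 'v wgraph set \<Rightarrow> (nat \<Rightarrow> 'v wgraph set) \<Rightarrow> bool" where
  "linearly_layerable c C Ls \<longleftrightarrow> (\<exists>f. layerable_with C Ls f \<and> (\<forall>S>0. real (f S) \<le> c * S))"

definition D_bounded :: "'v wgraph \<Rightarrow> real \<Rightarrow> 'v set set \<Rightarrow> bool" where
  "D_bounded G D U \<longleftrightarrow> (\<forall>X\<in>U. \<forall>x\<in>X. \<forall>y\<in>X. gdist G x y \<le> ereal D)"

definition r_disjoint :: "'v wgraph \<Rightarrow> real \<Rightarrow> 'v set set \<Rightarrow> bool" where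
  "r_disjoint G r U \<longleftrightarrow> (\<forall>X\<in>U. \<forall>Y\<in>U. X \<noteq> Y \<longrightarrow> (\<forall>x\<in>X. \<forall>y\<in>Y. gdist G x y > ereal r))"

definition control_fun :: "(real \<Rightarrow> real) \<Rightarrow> nat \<Rightarrow> 'v wgraph \<Rightarrow> bool" where
  "control_fun D n G \<longleftrightarrow> (\<forall>r>0. D r > 0) \<and>
     (\<forall>r>0. \<exists>U :: nat \<Rightarrow> 'v set set.
        (\<forall>i<Suc n. \<forall>X\<in>U i. X \<subseteq> verts G) \<and>
        (\<Union>i<Suc n. \<Union>(U i)) = verts G \<and>
        (\<forall>i<Suc n. r_disjoint G r (U i)) \<and>
        (\<forall>i<Suc n. D_bounded G (D r) (U i)))"

definition control_fun_class :: "(real \<Rightarrow> real) \<Rightarrow> nat \<Rightarrow> 'v wgraph set \<Rightarrow> bool" where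
  "control_fun_class D n C \<longleftrightarrow> (\<forall>G\<in>C. control_fun D n G)"

definition asdim_le :: "'v wgraph set \<Rightarrow> nat \<Rightarrow> bool" where
  "asdim_le C n \<longleftrightarrow> (\<exists>D. control_fun_class D n C)"

definition asdim_le_linear :: "'v wgraph set \<Rightarrow> nat \<Rightarrow> bool" where
  "asdim_le_linear C n \<longleftrightarrow> (\<exists>D c'. control_fun_class D n C \<and> (\<forall>r>0. D r \<le> c' * r + c'))"

definition ANdim_le :: "'v wgraph set \<Rightarrow> nat \<Rightarrow> bool" where
  "ANdim_le C n \<longleftrightarrow> (\<exists>D c'. control_fun_class D n C \<and> (\<forall>r>0. D r \<le> c' * r))"

end

theory Submission
  imports Defs
begin

lemma wl_simps[simp]:
  "walk_len G [] = 0" "walk_len G [a] = 0"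
  "walk_len G (a#b#xs) = weight G a b + walk_len G (b#xs)"
  by (simp_all add: walk_len_def)

lemma walk_Nil[simp]: "\<not> walk G []"
  by (simp add: walk_def)

lemma walk_single[simp]: "walk G [a] \<longleftrightarrow> a \<in> verts G"
  by (simp add: walk_def)

lemma walk_Cons2[simp]:
  "walk G (a#b#xs) \<longleftrightarrow> (a,b) \<in> edges G \<and> a \<in> verts G \<and> walk G (b#xs)"
proof
  assume h: "walk G (a#b#xs)"
  have "(a,b) \<in> edges G" using h unfolding walk_def by (metis length_Cons nth_Cons_0 nth_Cons_Suc zero_less_Suc Suc_less_eq)
  moreover have "\<forall>i. Suc i < length (b#xs) \<longrightarrow> ((b#xs) ! i, (b#xs) ! Suc i) \<in> edges G"
  proof (intro allI impI)
    fix i assume "Suc i < length (b#xs)"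
    then have "Suc (Suc i) < length (a#b#xs)" by simp
    then show "((b#xs) ! i, (b#xs) ! Suc i) \<in> edges G" using h unfolding walk_def by auto
  qed
  ultimately show "(a,b) \<in> edges G \<and> a \<in> verts G \<and> walk G (b#xs)" using h unfolding walk_def by auto
next
  assume h: "(a,b) \<in> edges G \<and> a \<in> verts G \<and> walk G (b#xs)"
  show "walk G (a#b#xs)" unfolding walk_def
  proof (intro conjI allI impI)
    show "set (a # b # xs) \<subseteq> verts G" using h unfolding walk_def by auto
  next
    fix i assume i: "Suc i < length (a#b#xs)"
    show "((a#b#xs) ! i, (a#b#xs) ! Suc i) \<in> edges G"
    proof (cases i)
      case 0 then show ?thesis using h by simp
    next
      case (Suc j) then show ?thesis using h i unfolding walk_def by auto
    qed
  qed simp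
qed

lemma walk_len_nonneg:
  assumes G: "finite_wgraph G" and "walk G xs" shows "walk_len G xs \<ge> 0"
  using assms(2)
proof (induction xs rule: induct_list012)
  case (3 a b zs)
  then have "(a,b) \<in> edges G" "walk G (b#zs)" by auto
  then have "weight G a b > 0" using G unfolding finite_wgraph_def by auto
  with 3 show ?case by auto
qed auto

lemma walk_prefix:
  assumes G: "finite_wgraph G" and "walk G xs" and "i < length xs"
  shows "walk G (take (Suc i) xs) \<and> walk_len G (take (Suc i) xs) \<le> walk_len G xs"
  using assms(2,3)
proof (induction xs arbitrary: i rule: induct_list012)
  case (2 a) then show ?case by simp
next
  case (3 a b zs)
  have ab: "(a,b) \<in> edges G" "walk G (b#zs)" "a \<in> verts G" using 3 by auto
  show ?case
  proof (cases i)
    case 0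
    then show ?thesis using ab walk_len_nonneg[OF G, of "a#b#zs"] 3(3) by auto
  next
    case (Suc j)
    then have "j < length (b#zs)" using 3 by simp
    from 3(2)[OF ab(2) this] show ?thesis using ab Suc by simp
  qed
qed simp

lemma walk_append:
  assumes "walk G xs" "walk G ys" "last xs = hd ys"
  shows "walk G (xs @ tl ys) \<and> walk_len G (xs @ tl ys) = walk_len G xs + walk_len G ys
     \<and> hd (xs @ tl ys) = hd xs \<and> last (xs @ tl ys) = last ys"
  using assms
proof (induction xs rule: induct_list012)
  case 1 then show ?case by (simp add: walk_def)
next
  case (2 a)
  then show ?case by (cases ys) auto
next
  case (3 a b zs)
  then have "walk G (b#zs)" by simp
  from 3(2)[OF this 3(4)] 3(5) have IH: "walk G ((b#zs) @ tl ys) \<and> walk_len G ((b#zs) @ tl ys) = walk_len G (b#zs) + walk_len G ys \<and> last ((b#zs) @ tl ys) = last ys"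
    by simp
  show ?case using IH 3(3) by auto
qed

lemma walk_rev:
  assumes G: "finite_wgraph G" and "walk G xs"
  shows "walk G (rev xs) \<and> walk_len G (rev xs) = walk_len G xs"
  using assms(2)
proof (induction xs rule: induct_list012)
  case (3 a b zs)
  have ab: "(a,b) \<in> edges G" "walk G (b#zs)" "a \<in> verts G" using 3 by auto
  have ba: "(b,a) \<in> edges G" "weight G b a = weight G a b"
    using G ab(1) unfolding finite_wgraph_def sym_def by auto
  have bv: "b \<in> verts G" using G ab(1) unfolding finite_wgraph_def by auto
  have IH: "walk G (rev (b#zs)) \<and> walk_len G (rev (b#zs)) = walk_len G (b#zs)" using 3(2) ab(2) .
  have w2: "walk G [b,a]" using ba bv ab by simp
  have "last (rev (b#zs)) = hd [b,a]" by simp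
  from walk_append[OF conjunct1[OF IH] w2 this]
  have "walk G (rev (b # zs) @ [a]) \<and> walk_len G (rev (b # zs) @ [a]) = walk_len G (rev (b#zs)) + walk_len G [b,a]"
    by simp
  then show ?case using IH ba by simp
qed auto

lemma walk_induced:
  "walk (induced G T) xs \<longleftrightarrow> walk G xs \<and> set xs \<subseteq> T"
  unfolding walk_def induced_def by (auto; meson Suc_lessD nth_mem subsetD)

lemma walk_len_induced[simp]: "walk_len (induced G T) xs = walk_len G xs"
  unfolding walk_len_def induced_def by simp

lemma gdist_le_walk:
  assumes "walk G w" "hd w = x" "last w = y"
  shows "gdist G x y \<le> ereal (walk_len G w)"
  unfolding gdist_def by (rule Inf_lower) (use assms in blast)

lemma gdist_le_iff:
  "gdist G x y \<le> ereal e \<longleftrightarrow> (\<forall>\<epsilon>>0. \<exists>w. walk G w \<and> hd w = x \<and> last w = y \<and> walk_len G w < e + \<epsilon>)"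
proof
  assume h: "gdist G x y \<le> ereal e"
  show "\<forall>\<epsilon>>0. \<exists>w. walk G w \<and> hd w = x \<and> last w = y \<and> walk_len G w < e + \<epsilon>"
  proof (intro allI impI)
    fix \<epsilon> :: real assume "\<epsilon> > 0"
    then have "ereal e < ereal (e + \<epsilon>)" by simp
    then have "gdist G x y < ereal (e + \<epsilon>)" by (rule order_le_less_trans[OF h])
    then obtain s where "s \<in> {ereal (walk_len G xs) | xs. walk G xs \<and> hd xs = x \<and> last xs = y}" "s < ereal (e+\<epsilon>)"
      unfolding gdist_def Inf_less_iff by blast
    then show "\<exists>w. walk G w \<and> hd w = x \<and> last w = y \<and> walk_len G w < e + \<epsilon>" by auto
  qed
next
  assume h: "\<forall>\<epsilon>>0. \<exists>w. walk G w \<and> hd w = x \<and> last w = y \<and> walk_len G w < e + \<epsilon>"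
  show "gdist G x y \<le> ereal e"
  proof (rule ereal_le_epsilon2)
    fix \<epsilon> :: real assume "\<epsilon> > 0"
    then obtain w where w: "walk G w" "hd w = x" "last w = y" "walk_len G w < e + \<epsilon>" using h by blast
    have "gdist G x y \<le> ereal (walk_len G w)" using gdist_le_walk[OF w(1-3)] .
    also have "\<dots> \<le> ereal e + ereal \<epsilon>" using w(4) by simp
    finally show "gdist G x y \<le> ereal e + ereal \<epsilon>" .
  qed
qed

lemma gdist_refl: "x \<in> verts G \<Longrightarrow> e \<ge> 0 \<Longrightarrow> gdist G x x \<le> ereal e"
  using gdist_le_walk[of G "[x]" x x] by (simp add: order_trans)

lemma gdist_tri:
  assumes G: "finite_wgraph G" and "gdist G x y \<le> ereal a" "gdist G y z \<le> ereal b"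
  shows "gdist G x z \<le> ereal (a + b)"
  unfolding gdist_le_iff
proof (intro allI impI)
  fix \<epsilon> :: real assume e: "\<epsilon> > 0"
  obtain w1 where w1: "walk G w1" "hd w1 = x" "last w1 = y" "walk_len G w1 < a + \<epsilon>/2"
    using assms(2) e unfolding gdist_le_iff by (meson half_gt_zero)
  obtain w2 where w2: "walk G w2" "hd w2 = y" "last w2 = z" "walk_len G w2 < b + \<epsilon>/2"
    using assms(3) e unfolding gdist_le_iff by (meson half_gt_zero)
  have "last w1 = hd w2" using w1 w2 by simp
  from walk_append[OF w1(1) w2(1) this] w1 w2
  show "\<exists>w. walk G w \<and> hd w = x \<and> last w = z \<and> walk_len G w < a + b + \<epsilon>"
    by (intro exI[of _ "w1 @ tl w2"]) auto
qed

lemma gdist_sym: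
  assumes G: "finite_wgraph G" and "gdist G x y \<le> ereal a"
  shows "gdist G y x \<le> ereal a"
  unfolding gdist_le_iff
proof (intro allI impI)
  fix \<epsilon> :: real assume e: "\<epsilon> > 0"
  obtain w where w: "walk G w" "hd w = x" "last w = y" "walk_len G w < a + \<epsilon>"
    using assms(2) e unfolding gdist_le_iff by blast
  have ne: "w \<noteq> []" using w(1) unfolding walk_def by auto
  from walk_rev[OF G w(1)] w ne
  show "\<exists>w. walk G w \<and> hd w = y \<and> last w = x \<and> walk_len G w < a + \<epsilon>"
    by (intro exI[of _ "rev w"]) (auto simp: hd_rev last_rev)
qed

lemma gdist_induced: "gdist G x y \<le> gdist (induced G T) x y"
  unfolding gdist_def by (rule Inf_superset_mono) (auto simp: walk_induced)

lemma gdist_L: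
  assumes "real_projection G L" "x \<in> verts G" "y \<in> verts G" "gdist G x y \<le> ereal e"
  shows "\<bar>L x - L y\<bar> \<le> e"
  using assms unfolding real_projection_def by (metis ereal_less_eq(3) order_trans)

lemma gdist_walk_mem:
  assumes G: "finite_wgraph G" and "walk G w" "hd w = x" "z \<in> set w"
  shows "gdist G x z \<le> ereal (walk_len G w)"
proof -
  obtain i where i: "i < length w" "w ! i = z" using assms(4) by (auto simp: in_set_conv_nth)
  have ne: "w \<noteq> []" using assms(2) unfolding walk_def by auto
  from walk_prefix[OF G assms(2) i(1)]
  have p: "walk G (take (Suc i) w)" "walk_len G (take (Suc i) w) \<le> walk_len G w" by auto
  have "hd (take (Suc i) w) = x" using assms(3) ne by (cases w) auto
  moreover have "last (take (Suc i) w) = z" using i by (simp add: take_Suc_conv_app_nth)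
  ultimately have "gdist G x z \<le> ereal (walk_len G (take (Suc i) w))" using gdist_le_walk[OF p(1)] by blast
  then show ?thesis using p(2) by (meson ereal_less_eq(3) order_trans)
qed

lemma gdist_thick:
  assumes G: "finite_wgraph G" and L: "real_projection G L" and x: "x \<in> verts G"
    and T: "\<And>z. z \<in> verts G \<Longrightarrow> \<bar>L z - L x\<bar> < m \<Longrightarrow> z \<in> T"
    and d: "gdist G x y \<le> ereal e" and em: "e < m"
  shows "gdist (induced G T) x y \<le> ereal e"
  unfolding gdist_le_iff
proof (intro allI impI)
  fix \<epsilon> :: real assume e: "\<epsilon> > 0"
  define \<delta> where "\<delta> = min \<epsilon> (m - e)"
  have dpos: "\<delta> > 0" using e em by (simp add: \<delta>_def)
  obtain w where w: "walk G w" "hd w = x" "last w = y" "walk_len G w < e + \<delta>"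
    using d dpos unfolding gdist_le_iff by blast
  have "set w \<subseteq> T"
  proof
    fix z assume z: "z \<in> set w"
    have zv: "z \<in> verts G" using w(1) z unfolding walk_def by auto
    have "gdist G x z \<le> ereal (walk_len G w)" using gdist_walk_mem[OF G w(1,2) z] .
    then have "\<bar>L x - L z\<bar> \<le> walk_len G w" using gdist_L[OF L x zv] by blast
    then have "\<bar>L z - L x\<bar> < m" using w(4) \<delta>_def by auto
    then show "z \<in> T" using T zv by blast
  qed
  then show "\<exists>w. walk (induced G T) w \<and> hd w = x \<and> last w = y \<and> walk_len (induced G T) w < e + \<epsilon>"
    using w \<delta>_def by (intro exI[of _ w]) (auto simp: walk_induced)
qed

lemma layer_cover:
  fixes G :: "'v wgraph"
  assumes G: "finite_wgraph G" and L: "real_projection G L"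
    and layer: "\<forall>S>0. \<forall>A. inf_S_bounded G L S A \<longrightarrow> induced G A \<in> Ls (f S)"
    and ctrl: "\<And>i. control_fun_class (Dfun i) n (Ls i)"
    and ab: "\<alpha> \<le> \<beta>" and rho: "\<rho> > 0"
  shows "\<exists>U. (\<forall>i<Suc n. \<forall>X\<in>U i. X \<subseteq> verts G)
     \<and> (\<forall>x\<in>verts G. \<alpha> \<le> L x \<and> L x < \<beta> \<longrightarrow> (\<exists>i<Suc n. \<exists>X\<in>U i. x \<in> X))
     \<and> (\<forall>i<Suc n. \<forall>X\<in>U i. \<forall>Y\<in>U i. X \<noteq> Y \<longrightarrow> (\<forall>x\<in>X. \<forall>y\<in>Y. \<alpha> \<le> L x \<and> L x < \<beta> \<longrightarrow> \<not> gdist G x y \<le> ereal \<rho>))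
     \<and> (\<forall>i<Suc n. \<forall>X\<in>U i. \<forall>x\<in>X. \<forall>y\<in>X. gdist G x y \<le> ereal (Dfun (f (\<beta> - \<alpha> + 4*\<rho>)) \<rho>))"
proof -
  define A where "A = {z \<in> verts G. \<alpha> - 2*\<rho> \<le> L z \<and> L z \<le> \<beta> + 2*\<rho>}"
  define S where "S = \<beta> - \<alpha> + 4*\<rho>"
  have Spos: "S > 0" using ab rho by (simp add: S_def)
  have "inf_S_bounded G L S A" unfolding inf_S_bounded_def A_def S_def by auto
  then have HL: "induced G A \<in> Ls (f S)" using layer Spos by blast
  then have "control_fun (Dfun (f S)) n (induced G A)" using ctrl unfolding control_fun_class_def by blast
  from this[unfolded control_fun_def, THEN conjunct2, rule_format, OF rho] obtain U where U1: "\<forall>i<Suc n. \<forall>X\<in>U i. X \<subseteq> verts (induced G A)"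
     and U2: "(\<Union>i<Suc n. \<Union>(U i)) = verts (induced G A)"
     and U3: "\<forall>i<Suc n. r_disjoint (induced G A) \<rho> (U i)"
     and U4: "\<forall>i<Suc n. D_bounded (induced G A) (Dfun (f S) \<rho>) (U i)"
    by blast
  have vH: "verts (induced G A) = verts G \<inter> A" by (simp add: induced_def)
  show ?thesis
  proof (intro exI[of _ U] conjI)
    show "\<forall>i<Suc n. \<forall>X\<in>U i. X \<subseteq> verts G" using U1 vH by blast
  next
    show "\<forall>x\<in>verts G. \<alpha> \<le> L x \<and> L x < \<beta> \<longrightarrow> (\<exists>i<Suc n. \<exists>X\<in>U i. x \<in> X)"
    proof (intro ballI impI)
      fix x assume x: "x \<in> verts G" "\<alpha> \<le> L x \<and> L x < \<beta>"
      then have "x \<in> verts (induced G A)" using vH rho unfolding A_def by auto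
      then show "\<exists>i<Suc n. \<exists>X\<in>U i. x \<in> X" using U2 by blast
    qed
  next
    show "\<forall>i<Suc n. \<forall>X\<in>U i. \<forall>Y\<in>U i. X \<noteq> Y \<longrightarrow> (\<forall>x\<in>X. \<forall>y\<in>Y. \<alpha> \<le> L x \<and> L x < \<beta> \<longrightarrow> \<not> gdist G x y \<le> ereal \<rho>)"
    proof (intro allI impI ballI notI)
      fix i X Y x y
      assume i: "i < Suc n" and XY: "X \<in> U i" "Y \<in> U i" "X \<noteq> Y" and xy: "x \<in> X" "y \<in> Y"
        and xr: "\<alpha> \<le> L x \<and> L x < \<beta>" and d: "gdist G x y \<le> ereal \<rho>"
      have xv: "x \<in> verts G" using U1 i XY xy vH by blast
      have "gdist (induced G A) x y \<le> ereal \<rho>"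
      proof (rule gdist_thick[OF G L xv _ d])
        fix z assume "z \<in> verts G" "\<bar>L z - L x\<bar> < 2*\<rho>"
        then show "z \<in> A" using xr unfolding A_def by auto
      qed (use rho in simp)
      moreover have "gdist (induced G A) x y > ereal \<rho>"
        using U3 i XY xy unfolding r_disjoint_def by blast
      ultimately show False by simp
    qed
  next
    show "\<forall>i<Suc n. \<forall>X\<in>U i. \<forall>x\<in>X. \<forall>y\<in>X. gdist G x y \<le> ereal (Dfun (f (\<beta> - \<alpha> + 4*\<rho>)) \<rho>)"
    proof (intro allI impI ballI)
      fix i X x y assume "i < Suc n" "X \<in> U i" "x \<in> X" "y \<in> X"
      then have "gdist (induced G A) x y \<le> ereal (Dfun (f S) \<rho>)" using U4 unfolding D_bounded_def by blast
      then show "gdist G x y \<le> ereal (Dfun (f (\<beta> - \<alpha> + 4*\<rho>)) \<rho>)"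
        using gdist_induced[of G x y A] unfolding S_def by (meson order_trans)
    qed
  qed
qed

definition blkW :: "real \<Rightarrow> nat \<Rightarrow> real" where "blkW r n = 2*r*(real n + 1)"
definition blkP :: "real \<Rightarrow> nat \<Rightarrow> real" where "blkP r n = 2*r*(real n + 2)"

lemma int_step: "(k1::int) < k2 \<Longrightarrow> (P::real) \<ge> 0 \<Longrightarrow> real_of_int k1 * P + P \<le> real_of_int k2 * P"
proof -
  assume "k1 < k2" "P \<ge> 0"
  then have "real_of_int k1 + 1 \<le> real_of_int k2" by linarith
  then have "(real_of_int k1 + 1) * P \<le> real_of_int k2 * P" using \<open>P \<ge> 0\<close> by (rule mult_right_mono)
  then show ?thesis by (simp add: algebra_simps)
qed

locale twolevel =
  fixes G :: "'v wgraph" and L :: "'v \<Rightarrow> real" and r :: real and n :: nat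
    and DS DB :: real and US UB :: "int \<Rightarrow> nat \<Rightarrow> 'v set set"
  assumes G: "finite_wgraph G" and L: "real_projection G L" and rpos: "r > 0"
    and DSpos: "DS \<ge> 0" and DBpos: "DB \<ge> 0"
    and US1: "\<And>k i X. i < Suc n \<Longrightarrow> X \<in> US k i \<Longrightarrow> X \<subseteq> verts G"
    and US2: "\<And>k x. x \<in> verts G \<Longrightarrow> real_of_int k * blkP r n \<le> L x \<Longrightarrow> L x < real_of_int k * blkP r n + blkW r n
        \<Longrightarrow> \<exists>i<Suc n. \<exists>X\<in>US k i. x \<in> X"
    and US3: "\<And>k i X Y x y. i < Suc n \<Longrightarrow> X \<in> US k i \<Longrightarrow> Y \<in> US k i \<Longrightarrow> X \<noteq> Y \<Longrightarrow> x \<in> X \<Longrightarrow> y \<in> Y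
        \<Longrightarrow> real_of_int k * blkP r n \<le> L x \<Longrightarrow> L x < real_of_int k * blkP r n + blkW r n
        \<Longrightarrow> \<not> gdist G x y \<le> ereal r"
    and US4: "\<And>k i X x y. i < Suc n \<Longrightarrow> X \<in> US k i \<Longrightarrow> x \<in> X \<Longrightarrow> y \<in> X \<Longrightarrow> gdist G x y \<le> ereal DS"
    and UB1: "\<And>k i X. i < Suc n \<Longrightarrow> X \<in> UB k i \<Longrightarrow> X \<subseteq> verts G"
    and UB2: "\<And>k x. x \<in> verts G \<Longrightarrow> real_of_int k * blkP r n + blkW r n \<le> L x \<Longrightarrow> L x < real_of_int k * blkP r n + blkP r n
        \<Longrightarrow> \<exists>i<Suc n. \<exists>X\<in>UB k i. x \<in> X"
    and UB3: "\<And>k i X Y x y. i < Suc n \<Longrightarrow> X \<in> UB k i \<Longrightarrow> Y \<in> UB k i \<Longrightarrow> X \<noteq> Y \<Longrightarrow> x \<in> X \<Longrightarrow> y \<in> Y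
        \<Longrightarrow> real_of_int k * blkP r n + blkW r n \<le> L x \<Longrightarrow> L x < real_of_int k * blkP r n + blkP r n
        \<Longrightarrow> \<not> gdist G x y \<le> ereal (2*r + DS)"
    and UB4: "\<And>k i X x y. i < Suc n \<Longrightarrow> X \<in> UB k i \<Longrightarrow> x \<in> X \<Longrightarrow> y \<in> X \<Longrightarrow> gdist G x y \<le> ereal DB"
begin

abbreviation "P \<equiv> blkP r n"
abbreviation "W \<equiv> blkW r n"

lemma PW: "P = W + 2*r" "W = 2*r*(real n + 1)" "W \<ge> 2*r" "P \<ge> 0"
  using rpos by (auto simp: blkP_def blkW_def algebra_simps)

definition "SB k = {x\<in>verts G. real_of_int k * P \<le> L x \<and> L x < real_of_int k * P + W}"
definition "BB k = {x\<in>verts G. real_of_int k * P + W \<le> L x \<and> L x < real_of_int k * P + P}"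
definition "Lft k j = {x\<in>verts G. real_of_int k * P \<le> L x \<and> L x < real_of_int k * P + r + 2*r*real j}"
definition "Cut k j = {x\<in>verts G. real_of_int k * P + r + 2*r*real j \<le> L x \<and> L x < real_of_int k * P + 2*r + 2*r*real j}"
definition "Rgt k j = {x\<in>verts G. real_of_int k * P + 2*r + 2*r*real j \<le> L x \<and> L x < real_of_int k * P + W}"

definition "Bg j = {X \<inter> BB k | k X. X \<in> UB k j}"
definition "Pt j = {X \<inter> Lft k j | k X. X \<in> US k j} \<union> {X \<inter> Rgt k j | k X. X \<in> US k j}"
definition "near p b \<longleftrightarrow> (\<exists>x\<in>p. \<exists>y\<in>b. gdist G x y \<le> ereal r)"
definition "Mg j b = b \<union> \<Union>{p\<in>Pt j. near p b}"
definition "Fam j = (if j \<le> n then {Mg j b | b. b \<in> Bg j} \<union> {p\<in>Pt j. \<forall>b\<in>Bg j. \<not> near p b}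
                     else {X \<inter> Cut k i | k i X. i \<le> n \<and> X \<in> US k i})"

lemma sepL: "x \<in> verts G \<Longrightarrow> y \<in> verts G \<Longrightarrow> \<bar>L x - L y\<bar> > r \<Longrightarrow> \<not> gdist G x y \<le> ereal r"
  using gdist_L[OF L] by fastforce

lemma jW: "j \<le> n \<Longrightarrow> 2*r + 2*r*real j \<le> W"
proof -
  assume "j \<le> n"
  then have "2*r*real j \<le> 2*r*real n" using rpos by simp
  then show ?thesis using PW(2) by (simp add: algebra_simps)
qed

lemma LR_sub: "j \<le> n \<Longrightarrow> Lft k j \<subseteq> SB k" "Rgt k j \<subseteq> SB k" "j \<le> n \<Longrightarrow> Cut k j \<subseteq> SB k"
proof -
  have j0: "0 \<le> 2*r*real j" using rpos by simp
  show "j \<le> n \<Longrightarrow> Lft k j \<subseteq> SB k" using jW rpos unfolding Lft_def SB_def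
    by (smt (verit, ccfv_SIG) mem_Collect_eq subsetI)
  show "Rgt k j \<subseteq> SB k" using j0 rpos unfolding Rgt_def SB_def
    by (smt (verit, ccfv_SIG) mem_Collect_eq subsetI)
  show "j \<le> n \<Longrightarrow> Cut k j \<subseteq> SB k" using jW j0 rpos unfolding Cut_def SB_def
    by (smt (verit, ccfv_SIG) mem_Collect_eq subsetI)
qed

lemma sep_a: assumes "x \<in> SB k1" "y \<in> SB k2" "k1 \<noteq> k2" shows "\<bar>L x - L y\<bar> > r"
proof -
  have x: "real_of_int k1 * P \<le> L x" "L x < real_of_int k1 * P + W" using assms(1) unfolding SB_def by auto
  have y: "real_of_int k2 * P \<le> L y" "L y < real_of_int k2 * P + W" using assms(2) unfolding SB_def by auto
  have p: "P = W + 2*r" using PW(1) .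
  show ?thesis
  proof (cases "k1 < k2")
    case True
    from int_step[OF True PW(4)] show ?thesis using x y p rpos by linarith
  next
    case False
    then have "k2 < k1" using assms by simp
    from int_step[OF this PW(4)] show ?thesis using x y p rpos by linarith
  qed
qed

lemma sep_b: assumes "x \<in> BB k1" "y \<in> BB k2" "k1 \<noteq> k2" shows "\<bar>L x - L y\<bar> > r"
proof -
  have x: "real_of_int k1 * P + W \<le> L x" "L x < real_of_int k1 * P + P" using assms(1) unfolding BB_def by auto
  have y: "real_of_int k2 * P + W \<le> L y" "L y < real_of_int k2 * P + P" using assms(2) unfolding BB_def by auto
  have p: "W \<ge> 2*r" using PW(3) .
  show ?thesis
  proof (cases "k1 < k2")
    case True
    from int_step[OF True PW(4)] show ?thesis using x y p rpos by linarith
  next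
    case False
    then have "k2 < k1" using assms by simp
    from int_step[OF this PW(4)] show ?thesis using x y p rpos by linarith
  qed
qed

lemma sep_c: assumes "x \<in> Lft k j" "y \<in> Rgt k j" shows "\<bar>L x - L y\<bar> > r"
proof -
  have x: "L x < real_of_int k * P + r + 2*r*real j" using assms(1) unfolding Lft_def by auto
  have y: "real_of_int k * P + 2*r + 2*r*real j \<le> L y" using assms(2) unfolding Rgt_def by auto
  show ?thesis using x y by linarith
qed

lemma sep_d: assumes "x \<in> Cut k i1" "y \<in> Cut k i2" "i1 \<noteq> i2" shows "\<bar>L x - L y\<bar> > r"
proof -
  have x: "real_of_int k * P + r + 2*r*real i1 \<le> L x" "L x < real_of_int k * P + 2*r + 2*r*real i1"
    using assms(1) unfolding Cut_def by auto
  have y: "real_of_int k * P + r + 2*r*real i2 \<le> L y" "L y < real_of_int k * P + 2*r + 2*r*real i2"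
    using assms(2) unfolding Cut_def by auto
  have m: "2*r*(real a + 1) \<le> 2*r*real b" if "a < b" for a b
  proof -
    have "real a + 1 \<le> real b" using that by simp
    then show ?thesis using rpos by (intro mult_left_mono) auto
  qed
  show ?thesis
  proof (cases "i1 < i2")
    case True
    from m[OF True] have "2*r*real i1 + 2*r \<le> 2*r*real i2" by (simp add: algebra_simps)
    then show ?thesis using x y by linarith
  next
    case False
    then have "i2 < i1" using assms by simp
    from m[OF this] have "2*r*real i2 + 2*r \<le> 2*r*real i1" by (simp add: algebra_simps)
    then show ?thesis using x y by linarith
  qed
qed

lemma sep_e: assumes "x \<in> Lft k j" "j \<le> n" "y \<in> BB k'" "k' \<noteq> k - 1" shows "\<bar>L x - L y\<bar> > r"
proof -
  have x: "real_of_int k * P \<le> L x" "L x < real_of_int k * P + r + 2*r*real j" using assms(1) unfolding Lft_def by auto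
  have y: "real_of_int k' * P + W \<le> L y" "L y < real_of_int k' * P + P" using assms(3) unfolding BB_def by auto
  have jn: "2*r*real j \<le> 2*r*real n" using assms(2) rpos by simp
  have w: "W = 2*r*real n + 2*r" using PW(2) by (simp add: algebra_simps)
  have p: "P = W + 2*r" using PW(1) .
  show ?thesis
  proof (cases "k' \<ge> k")
    case True
    have "real_of_int k * P \<le> real_of_int k' * P" using True PW(4) by (simp add: mult_right_mono)
    then show ?thesis using x y jn w rpos by linarith
  next
    case False
    then have "k' + 1 < k" using assms(4) by simp
    from int_step[OF this PW(4)] have "real_of_int k' * P + P + P \<le> real_of_int k * P" by (simp add: algebra_simps)
    then show ?thesis using x y p PW(3) rpos by linarith
  qed
qed

lemma sep_f: assumes "x \<in> Rgt k j" "y \<in> BB k'" "k' \<noteq> k" shows "\<bar>L x - L y\<bar> > r"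
proof -
  have x: "real_of_int k * P + 2*r + 2*r*real j \<le> L x" "L x < real_of_int k * P + W" using assms(1) unfolding Rgt_def by auto
  have y: "real_of_int k' * P + W \<le> L y" "L y < real_of_int k' * P + P" using assms(2) unfolding BB_def by auto
  have j0: "0 \<le> 2*r*real j" using rpos by simp
  have p: "P = W + 2*r" using PW(1) .
  show ?thesis
  proof (cases "k' > k")
    case True
    from int_step[OF True PW(4)] show ?thesis using x y p rpos PW(3) by linarith
  next
    case False
    then have "k' < k" using assms(3) by simp
    from int_step[OF this PW(4)] show ?thesis using x y j0 rpos by linarith
  qed
qed

end

context twolevel begin

lemma gsym: "gdist G x y \<le> ereal a \<Longrightarrow> gdist G y x \<le> ereal a"
  using gdist_sym[OF G] .

lemma gtri: "gdist G x y \<le> ereal a \<Longrightarrow> gdist G y z \<le> ereal b \<Longrightarrow> gdist G x z \<le> ereal (a+b)"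
  using gdist_tri[OF G] .

lemma Bg_E: assumes "b \<in> Bg j" obtains k X where "X \<in> UB k j" "b = X \<inter> BB k"
  using assms unfolding Bg_def by blast

lemma Pt_E: assumes "p \<in> Pt j"
  obtains (Lc) k X where "X \<in> US k j" "p = X \<inter> Lft k j"
    | (Rc) k X where "X \<in> US k j" "p = X \<inter> Rgt k j"
  using assms unfolding Pt_def by blast

lemma Bg_sub: "j \<le> n \<Longrightarrow> b \<in> Bg j \<Longrightarrow> b \<subseteq> verts G"
  by (auto elim!: Bg_E simp: BB_def)

lemma Pt_sub: "j \<le> n \<Longrightarrow> p \<in> Pt j \<Longrightarrow> p \<subseteq> verts G"
  by (auto elim!: Pt_E simp: Lft_def Rgt_def)

lemma Pt_diam: "j \<le> n \<Longrightarrow> p \<in> Pt j \<Longrightarrow> x \<in> p \<Longrightarrow> y \<in> p \<Longrightarrow> gdist G x y \<le> ereal DS"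
  by (erule Pt_E) (auto intro: US4[of j])

lemma Bg_diam: "j \<le> n \<Longrightarrow> b \<in> Bg j \<Longrightarrow> x \<in> b \<Longrightarrow> y \<in> b \<Longrightarrow> gdist G x y \<le> ereal DB"
  by (erule Bg_E) (auto intro: UB4[of j])

lemma same_SB: assumes "x \<in> SB k1" "x \<in> SB k2" shows "k1 = k2"
proof (rule ccontr)
  assume "k1 \<noteq> k2"
  from sep_a[OF assms this] rpos show False by simp
qed

lemma PD: assumes j: "j \<le> n" and p: "p1 \<in> Pt j" "p2 \<in> Pt j" "p1 \<noteq> p2" and xy: "x \<in> p1" "y \<in> p2"
  shows "\<not> gdist G x y \<le> ereal r"
proof -
  have xv: "x \<in> verts G" "y \<in> verts G" using Pt_sub j p xy by blast+
  have jn: "j < Suc n" using j by simp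
  show ?thesis
  proof (rule Pt_E[OF p(1)])
    fix k1 X1 assume a: "X1 \<in> US k1 j" "p1 = X1 \<inter> Lft k1 j"
    show ?thesis
    proof (rule Pt_E[OF p(2)])
      fix k2 X2 assume b: "X2 \<in> US k2 j" "p2 = X2 \<inter> Lft k2 j"
      show ?thesis
      proof (cases "k1 = k2")
        case True
        then have "X1 \<noteq> X2" using a b p(3) by auto
        moreover have "x \<in> SB k1" using a xy LR_sub(1)[OF j] by blast
        ultimately show ?thesis using US3[OF jn a(1), of X2 x y] b True a xy unfolding SB_def by auto
      next
        case False
        have "x \<in> SB k1" "y \<in> SB k2" using a b xy LR_sub(1)[OF j] by blast+
        from sep_a[OF this False] show ?thesis using sepL xv by blast
      qed
    next
      fix k2 X2 assume b: "X2 \<in> US k2 j" "p2 = X2 \<inter> Rgt k2 j"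
      show ?thesis
      proof (cases "k1 = k2")
        case True
        have "x \<in> Lft k1 j" "y \<in> Rgt k1 j" using a b True xy by auto
        from sep_c[OF this] show ?thesis using sepL xv by blast
      next
        case False
        have "x \<in> SB k1" "y \<in> SB k2" using a b xy LR_sub(1)[OF j] LR_sub(2) by blast+
        from sep_a[OF this False] show ?thesis using sepL xv by blast
      qed
    qed
  next
    fix k1 X1 assume a: "X1 \<in> US k1 j" "p1 = X1 \<inter> Rgt k1 j"
    show ?thesis
    proof (rule Pt_E[OF p(2)])
      fix k2 X2 assume b: "X2 \<in> US k2 j" "p2 = X2 \<inter> Lft k2 j"
      show ?thesis
      proof (cases "k1 = k2")
        case True
        have "y \<in> Lft k1 j" "x \<in> Rgt k1 j" using a b True xy by auto
        from sep_c[OF this] show ?thesis using sepL xv by (metis abs_minus_commute)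
      next
        case False
        have "x \<in> SB k1" "y \<in> SB k2" using a b xy LR_sub(1)[OF j] LR_sub(2) by blast+
        from sep_a[OF this False] show ?thesis using sepL xv by blast
      qed
    next
      fix k2 X2 assume b: "X2 \<in> US k2 j" "p2 = X2 \<inter> Rgt k2 j"
      show ?thesis
      proof (cases "k1 = k2")
        case True
        then have "X1 \<noteq> X2" using a b p(3) by auto
        moreover have "x \<in> SB k1" using a xy LR_sub(2) by blast
        ultimately show ?thesis using US3[OF jn a(1), of X2 x y] b True a xy unfolding SB_def by auto
      next
        case False
        have "x \<in> SB k1" "y \<in> SB k2" using a b xy LR_sub(2) by blast+
        from sep_a[OF this False] show ?thesis using sepL xv by blast
      qed
    qed
  qed
qed

lemma near_kL: assumes j: "j \<le> n" and nb: "near p b" and p: "p = X \<inter> Lft k j" and b: "b = Y \<inter> BB k'"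
  shows "k' = k - 1"
proof (rule ccontr)
  assume ne: "k' \<noteq> k - 1"
  obtain x y where xy: "x \<in> p" "y \<in> b" "gdist G x y \<le> ereal r" using nb unfolding near_def by blast
  have xv: "x \<in> verts G" "y \<in> verts G" using xy p b unfolding Lft_def BB_def by auto
  have "x \<in> Lft k j" "y \<in> BB k'" using xy p b by auto
  from sep_e[OF this(1) j this(2) ne] show False using sepL xv xy(3) by blast
qed

lemma near_kR: assumes nb: "near p b" and p: "p = X \<inter> Rgt k j" and b: "b = Y \<inter> BB k'"
  shows "k' = k"
proof (rule ccontr)
  assume ne: "k' \<noteq> k"
  obtain x y where xy: "x \<in> p" "y \<in> b" "gdist G x y \<le> ereal r" using nb unfolding near_def by blast
  have xv: "x \<in> verts G" "y \<in> verts G" using xy p b unfolding Rgt_def BB_def by auto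
  have "x \<in> Rgt k j" "y \<in> BB k'" using xy p b by auto
  from sep_f[OF this ne] show False using sepL xv xy(3) by blast
qed

lemma near_unique: assumes j: "j \<le> n" and p: "p \<in> Pt j" and b: "b1 \<in> Bg j" "b2 \<in> Bg j"
  and n1: "near p b1" and n2: "near p b2" shows "b1 = b2"
proof (rule ccontr)
  assume ne: "b1 \<noteq> b2"
  have jn: "j < Suc n" using j by simp
  obtain x1 y1 where a1: "x1 \<in> p" "y1 \<in> b1" "gdist G x1 y1 \<le> ereal r" using n1 unfolding near_def by blast
  obtain x2 y2 where a2: "x2 \<in> p" "y2 \<in> b2" "gdist G x2 y2 \<le> ereal r" using n2 unfolding near_def by blast
  have "gdist G y1 x1 \<le> ereal r" using gsym a1(3) .
  moreover have "gdist G x1 x2 \<le> ereal DS" using Pt_diam[OF j p a1(1) a2(1)] .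
  ultimately have "gdist G y1 x2 \<le> ereal (r + DS)" by (rule gtri)
  from gtri[OF this a2(3)] have d: "gdist G y1 y2 \<le> ereal (2*r + DS)" by (simp add: algebra_simps)
  obtain k1 Y1 where B1: "Y1 \<in> UB k1 j" "b1 = Y1 \<inter> BB k1" using b(1) by (rule Bg_E)
  obtain k2 Y2 where B2: "Y2 \<in> UB k2 j" "b2 = Y2 \<inter> BB k2" using b(2) by (rule Bg_E)
  have kk: "k1 = k2"
  proof (rule Pt_E[OF p])
    fix k X assume "X \<in> US k j" "p = X \<inter> Lft k j"
    then show "k1 = k2" using near_kL[OF j n1 _ B1(2)] near_kL[OF j n2 _ B2(2)] by metis
  next
    fix k X assume "X \<in> US k j" "p = X \<inter> Rgt k j"
    then show "k1 = k2" using near_kR[OF n1 _ B1(2)] near_kR[OF n2 _ B2(2)] by metis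
  qed
  have "Y1 \<noteq> Y2" using kk ne B1 B2 by blast
  moreover have "real_of_int k1 * P + W \<le> L y1 \<and> L y1 < real_of_int k1 * P + P" using B1 a1 unfolding BB_def by auto
  ultimately have "\<not> gdist G y1 y2 \<le> ereal (2*r + DS)" using UB3[OF jn B1(1), of Y2 y1 y2] B1 B2 kk a1 a2 by blast
  then show False using d by blast
qed

end

context twolevel begin

lemma mg_mem: "z \<in> Mg j b \<longleftrightarrow> z \<in> b \<or> (\<exists>p\<in>Pt j. near p b \<and> z \<in> p)"
  unfolding Mg_def by blast

lemma Fam_lo: "i \<le> n \<Longrightarrow> Fam i = {Mg i b | b. b \<in> Bg i} \<union> {p\<in>Pt i. \<forall>b\<in>Bg i. \<not> near p b}"
  by (simp add: Fam_def)

lemma Fam_hi: "Fam (Suc n) = {X \<inter> Cut k i | k i X. i \<le> n \<and> X \<in> US k i}"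
  by (simp add: Fam_def)

lemma near_sym: "x \<in> p \<Longrightarrow> y \<in> b \<Longrightarrow> gdist G y x \<le> ereal r \<Longrightarrow> near p b"
  unfolding near_def using gsym by blast

lemma mm_disj: assumes j: "j \<le> n" and b: "b1 \<in> Bg j" "b2 \<in> Bg j" "b1 \<noteq> b2"
  and xy: "x \<in> Mg j b1" "y \<in> Mg j b2" shows "\<not> gdist G x y \<le> ereal r"
proof
  assume d: "gdist G x y \<le> ereal r"
  have jn: "j < Suc n" using j by simp
  consider "x \<in> b1" | p1 where "p1 \<in> Pt j" "near p1 b1" "x \<in> p1" using xy(1) mg_mem by blast
  then show False
  proof cases
    case 1
    consider "y \<in> b2" | p2 where "p2 \<in> Pt j" "near p2 b2" "y \<in> p2" using xy(2) mg_mem by blast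
    then show False
    proof cases
      case 1
      obtain k1 Y1 where B1: "Y1 \<in> UB k1 j" "b1 = Y1 \<inter> BB k1" using b(1) by (rule Bg_E)
      obtain k2 Y2 where B2: "Y2 \<in> UB k2 j" "b2 = Y2 \<inter> BB k2" using b(2) by (rule Bg_E)
      have xv: "x \<in> verts G" "y \<in> verts G" using \<open>x \<in> b1\<close> \<open>y \<in> b2\<close> B1 B2 unfolding BB_def by auto
      show False
      proof (cases "k1 = k2")
        case True
        then have "Y1 \<noteq> Y2" using B1 B2 b(3) by blast
        moreover have "real_of_int k1 * P + W \<le> L x \<and> L x < real_of_int k1 * P + P"
          using B1 \<open>x \<in> b1\<close> unfolding BB_def by auto
        ultimately have "\<not> gdist G x y \<le> ereal (2*r + DS)"
          using UB3[OF jn B1(1), of Y2 x y] B1 B2 True \<open>x \<in> b1\<close> \<open>y \<in> b2\<close> by blast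
        moreover have "ereal r \<le> ereal (2*r + DS)" using rpos DSpos by simp
        then have "gdist G x y \<le> ereal (2*r + DS)" using d by (meson order_trans)
        ultimately show False by blast
      next
        case False
        have "x \<in> BB k1" "y \<in> BB k2" using B1 B2 \<open>x \<in> b1\<close> \<open>y \<in> b2\<close> by auto
        from sep_b[OF this False] show False using sepL xv d by blast
      qed
    next
      case 2
      have "near p2 b1" using near_sym[OF 2(3) \<open>x \<in> b1\<close>] gsym d by blast
      then have "b1 = b2" using near_unique[OF j 2(1) b(1) b(2) _ 2(2)] by blast
      then show False using b(3) by blast
    qed
  next
    case 2
    note P1 = 2
    consider "y \<in> b2" | p2 where "p2 \<in> Pt j" "near p2 b2" "y \<in> p2" using xy(2) mg_mem by blast
    then show False
    proof cases
      case 1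
      have "near p1 b2" using P1(3) 1 d unfolding near_def by blast
      then have "b1 = b2" using near_unique[OF j P1(1) b(1) b(2) P1(2)] by blast
      then show False using b(3) by blast
    next
      case 2
      have "p1 \<noteq> p2"
      proof
        assume "p1 = p2"
        then have "b1 = b2" using near_unique[OF j P1(1) b(1) b(2) P1(2)] 2(2) by blast
        then show False using b(3) by blast
      qed
      from PD[OF j P1(1) 2(1) this P1(3) 2(3)] show False using d by blast
    qed
  qed
qed

lemma mp_disj: assumes j: "j \<le> n" and b: "b \<in> Bg j" and p: "p \<in> Pt j" "\<forall>b\<in>Bg j. \<not> near p b"
  and xy: "x \<in> Mg j b" "y \<in> p" shows "\<not> gdist G x y \<le> ereal r" "\<not> gdist G y x \<le> ereal r"
proof -
  have A: False if d: "gdist G x y \<le> ereal r"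
  proof -
    consider "x \<in> b" | p1 where "p1 \<in> Pt j" "near p1 b" "x \<in> p1" using xy(1) mg_mem by blast
    then show False
    proof cases
      case 1
      have "near p b" using near_sym[OF xy(2) 1 d] .
      then show False using p b by blast
    next
      case 2
      have "p1 \<noteq> p" using 2 p b by blast
      from PD[OF j 2(1) p(1) this 2(3) xy(2)] show False using d by blast
    qed
  qed
  show "\<not> gdist G x y \<le> ereal r" using A by blast
  show "\<not> gdist G y x \<le> ereal r" using A gsym by blast
qed

lemma fam_disj_lo: assumes j: "j \<le> n" and AB: "A \<in> Fam j" "B \<in> Fam j" "A \<noteq> B" and xy: "x \<in> A" "y \<in> B"
  shows "\<not> gdist G x y \<le> ereal r"
proof -
  note F = Fam_lo[OF j]
  consider (M1) b1 where "b1 \<in> Bg j" "A = Mg j b1" | (P1) "A \<in> Pt j" "\<forall>b\<in>Bg j. \<not> near A b"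
    using AB(1) unfolding F by blast
  then show ?thesis
  proof cases
    case M1
    consider (M2) b2 where "b2 \<in> Bg j" "B = Mg j b2" | (P2) "B \<in> Pt j" "\<forall>b\<in>Bg j. \<not> near B b"
      using AB(2) unfolding F by blast
    then show ?thesis
    proof cases
      case M2
      then have "b1 \<noteq> b2" using M1 AB(3) by blast
      from mm_disj[OF j M1(1) M2(1) this] M1 M2 xy show ?thesis by blast
    next
      case P2
      from mp_disj(1)[OF j M1(1) P2] M1 xy show ?thesis by blast
    qed
  next
    case P1
    consider (M2) b2 where "b2 \<in> Bg j" "B = Mg j b2" | (P2) "B \<in> Pt j" "\<forall>b\<in>Bg j. \<not> near B b"
      using AB(2) unfolding F by blast
    then show ?thesis
    proof cases
      case M2
      from mp_disj(2)[OF j M2(1) P1] M2 xy show ?thesis by blast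
    next
      case P2
      from PD[OF j P1(1) P2(1) AB(3) xy] show ?thesis .
    qed
  qed
qed

lemma fam_disj_hi: assumes AB: "A \<in> Fam (Suc n)" "B \<in> Fam (Suc n)" "A \<noteq> B" and xy: "x \<in> A" "y \<in> B"
  shows "\<not> gdist G x y \<le> ereal r"
proof -
  obtain k1 i1 X1 where a: "i1 \<le> n" "X1 \<in> US k1 i1" "A = X1 \<inter> Cut k1 i1" using AB(1) unfolding Fam_hi by blast
  obtain k2 i2 X2 where b: "i2 \<le> n" "X2 \<in> US k2 i2" "B = X2 \<inter> Cut k2 i2" using AB(2) unfolding Fam_hi by blast
  have xv: "x \<in> verts G" "y \<in> verts G" using a b xy unfolding Cut_def by auto
  have xs: "x \<in> SB k1" "y \<in> SB k2" using LR_sub(3)[OF a(1)] LR_sub(3)[OF b(1)] a b xy by blast+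
  show ?thesis
  proof (cases "k1 = k2")
    case False
    from sep_a[OF xs False] show ?thesis using sepL xv by blast
  next
    case True
    show ?thesis
    proof (cases "i1 = i2")
      case False
      have "x \<in> Cut k1 i1" "y \<in> Cut k1 i2" using a b xy True by auto
      from sep_d[OF this False] show ?thesis using sepL xv by blast
    next
      case ii: True
      then have "X1 \<noteq> X2" using a b True AB(3) by blast
      moreover have "i1 < Suc n" using a by simp
      ultimately show ?thesis using US3[of i1 X1 k1 X2 x y] a b True ii xy xs unfolding SB_def by blast
    qed
  qed
qed

lemma mg_close: assumes j: "j \<le> n" and b: "b \<in> Bg j" and z: "z \<in> Mg j b"
  shows "\<exists>w\<in>b. gdist G z w \<le> ereal (DS + r) \<and> gdist G w z \<le> ereal (DS + r)"
proof -
  consider "z \<in> b" | p where "p \<in> Pt j" "near p b" "z \<in> p" using z mg_mem by blast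
  then show ?thesis
  proof cases
    case 1
    have "z \<in> verts G" using Bg_sub[OF j b] 1 by blast
    moreover have "0 \<le> DS + r" using DSpos rpos by simp
    ultimately have "gdist G z z \<le> ereal (DS + r)" by (rule gdist_refl)
    then show ?thesis using 1 by blast
  next
    case 2
    obtain x y where xy: "x \<in> p" "y \<in> b" "gdist G x y \<le> ereal r" using 2(2) unfolding near_def by blast
    have "gdist G z x \<le> ereal DS" using Pt_diam[OF j 2(1) 2(3) xy(1)] .
    from gtri[OF this xy(3)] have "gdist G z y \<le> ereal (DS + r)" .
    then show ?thesis using xy(2) gsym by blast
  qed
qed

lemma fam_diam: assumes i: "i < Suc (Suc n)" shows "D_bounded G (DB + 2*DS + 2*r) (Fam i)"
  unfolding D_bounded_def
proof (intro ballI)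
  fix A x y assume A: "A \<in> Fam i" and xy: "x \<in> A" "y \<in> A"
  have DSle: "ereal DS \<le> ereal (DB + 2*DS + 2*r)" using DSpos DBpos rpos by simp
  show "gdist G x y \<le> ereal (DB + 2*DS + 2*r)"
  proof (cases "i \<le> n")
    case j: True
    consider (M) b where "b \<in> Bg i" "A = Mg i b" | (Pp) "A \<in> Pt i" using A unfolding Fam_lo[OF j] by blast
    then show ?thesis
    proof cases
      case M
      obtain w1 where w1: "w1 \<in> b" "gdist G x w1 \<le> ereal (DS + r)" using mg_close[OF j M(1)] M xy by blast
      obtain w2 where w2: "w2 \<in> b" "gdist G w2 y \<le> ereal (DS + r)" using mg_close[OF j M(1)] M xy by blast
      have "gdist G w1 w2 \<le> ereal DB" using Bg_diam[OF j M(1) w1(1) w2(1)] .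
      from gtri[OF gtri[OF w1(2) this] w2(2)] show ?thesis by (simp add: algebra_simps)
    next
      case Pp
      from Pt_diam[OF j Pp xy] DSle show ?thesis by (rule order_trans)
    qed
  next
    case False
    then have "i = Suc n" using i by simp
    then have "A \<in> Fam (Suc n)" using A by simp
    then obtain k i' X where a: "i' \<le> n" "X \<in> US k i'" "A = X \<inter> Cut k i'" unfolding Fam_hi by blast
    have "i' < Suc n" using a by simp
    then have "gdist G x y \<le> ereal DS" using US4[of i' X k x y] a xy by blast
    from this DSle show ?thesis by (rule order_trans)
  qed
qed

lemma fam_sub: assumes i: "i < Suc (Suc n)" and A: "A \<in> Fam i" shows "A \<subseteq> verts G"
proof (cases "i \<le> n")
  case j: True
  consider (M) b where "b \<in> Bg i" "A = Mg i b" | (Pp) "A \<in> Pt i" using A unfolding Fam_lo[OF j] by blast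
  then show ?thesis
  proof cases
    case M
    show ?thesis
    proof
      fix z assume "z \<in> A"
      then consider "z \<in> b" | p where "p \<in> Pt i" "z \<in> p" unfolding M(2) mg_mem by blast
      then show "z \<in> verts G"
      proof cases
        case 1 then show ?thesis using Bg_sub[OF j M(1)] by blast
      next
        case 2 then show ?thesis using Pt_sub[OF j 2(1)] by blast
      qed
    qed
  next
    case Pp then show ?thesis using Pt_sub[OF j] by blast
  qed
next
  case False
  then have "i = Suc n" using i by simp
  then have "A \<in> Fam (Suc n)" using A by simp
  then obtain k i' X where "A = X \<inter> Cut k i'" unfolding Fam_hi by blast
  then show ?thesis by (auto simp: Cut_def)
qed

lemma fam_witness: "i \<le> Suc n \<Longrightarrow> A \<in> Fam i \<Longrightarrow> x \<in> A \<Longrightarrow> \<exists>i<Suc (Suc n). \<exists>A\<in>Fam i. x \<in> A"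
  by (intro exI[of _ i] conjI bexI[of _ A]) auto

lemma fam_cover: assumes x: "x \<in> verts G" shows "\<exists>i<Suc (Suc n). \<exists>A\<in>Fam i. x \<in> A"
proof -
  have Ppos: "P > 0" using rpos unfolding blkP_def by simp
  define k where "k = \<lfloor>L x / P\<rfloor>"
  have "real_of_int k \<le> L x / P" "L x / P < real_of_int k + 1" using floor_correct[of "L x / P"] unfolding k_def by auto
  then have k1: "real_of_int k * P \<le> L x" and k2: "L x < real_of_int k * P + P"
    using Ppos by (simp_all add: pos_le_divide_eq pos_divide_less_eq algebra_simps)
  show ?thesis
  proof (cases "L x < real_of_int k * P + W")
    case True
    obtain i X where iX: "i < Suc n" "X \<in> US k i" "x \<in> X" using US2[OF x k1 True] by blast
    have j: "i \<le> n" using iX by simp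
    have part: ?thesis if p: "p \<in> Pt i" "x \<in> p" for p
    proof (cases "\<exists>b\<in>Bg i. near p b")
      case True
      then obtain b where "b \<in> Bg i" "near p b" by blast
      have "x \<in> Mg i b" using p \<open>near p b\<close> by (auto simp: mg_mem)
      moreover have "Mg i b \<in> Fam i" using \<open>b \<in> Bg i\<close> unfolding Fam_lo[OF j] by blast
      ultimately show ?thesis using j fam_witness[of i] by simp
    next
      case False
      then have "p \<in> Fam i" using p unfolding Fam_lo[OF j] by blast
      then show ?thesis using j p fam_witness[of i] by simp
    qed
    consider "L x < real_of_int k * P + r + 2*r*real i"
      | "real_of_int k * P + r + 2*r*real i \<le> L x" "L x < real_of_int k * P + 2*r + 2*r*real i"
      | "real_of_int k * P + 2*r + 2*r*real i \<le> L x" by linarith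
    then show ?thesis
    proof cases
      case 1
      have "X \<inter> Lft k i \<in> Pt i" using iX unfolding Pt_def by blast
      moreover have "x \<in> X \<inter> Lft k i" using iX x k1 1 unfolding Lft_def by auto
      ultimately show ?thesis by (rule part)
    next
      case 2
      have "X \<inter> Cut k i \<in> Fam (Suc n)" using iX j unfolding Fam_hi by blast
      moreover have "x \<in> X \<inter> Cut k i" using iX x 2 unfolding Cut_def by auto
      ultimately show ?thesis using fam_witness[of "Suc n"] by simp
    next
      case 3
      have "X \<inter> Rgt k i \<in> Pt i" using iX unfolding Pt_def by blast
      moreover have "x \<in> X \<inter> Rgt k i" using iX x True 3 unfolding Rgt_def by auto
      ultimately show ?thesis by (rule part)
    qed
  next
    case False
    then have kw: "real_of_int k * P + W \<le> L x" by simp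
    obtain i X where iX: "i < Suc n" "X \<in> UB k i" "x \<in> X" using UB2[OF x kw k2] by blast
    have j: "i \<le> n" using iX by simp
    have b: "X \<inter> BB k \<in> Bg i" using iX unfolding Bg_def by blast
    have "x \<in> X \<inter> BB k" using iX x kw k2 unfolding BB_def by auto
    then have "x \<in> Mg i (X \<inter> BB k)" by (simp add: mg_mem)
    moreover have "Mg i (X \<inter> BB k) \<in> Fam i" using b unfolding Fam_lo[OF j] by blast
    ultimately show ?thesis using j fam_witness[of i] by simp
  qed
qed

theorem fam_ok: "\<exists>U. (\<forall>i<Suc (Suc n). \<forall>X\<in>U i. X \<subseteq> verts G) \<and>
        (\<Union>i<Suc (Suc n). \<Union>(U i)) = verts G \<and>
        (\<forall>i<Suc (Suc n). r_disjoint G r (U i)) \<and>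
        (\<forall>i<Suc (Suc n). D_bounded G (DB + 2*DS + 2*r) (U i))"
proof (intro exI[of _ Fam] conjI allI impI ballI)
  show "\<And>i X. i < Suc (Suc n) \<Longrightarrow> X \<in> Fam i \<Longrightarrow> X \<subseteq> verts G" using fam_sub by blast
  show "(\<Union>i<Suc (Suc n). \<Union>(Fam i)) = verts G"
  proof
    show "(\<Union>i<Suc (Suc n). \<Union>(Fam i)) \<subseteq> verts G" using fam_sub by blast
    show "verts G \<subseteq> (\<Union>i<Suc (Suc n). \<Union>(Fam i))"
    proof
      fix x assume "x \<in> verts G"
      from fam_cover[OF this] obtain i A where "i < Suc (Suc n)" "A \<in> Fam i" "x \<in> A" by blast
      then show "x \<in> (\<Union>i<Suc (Suc n). \<Union>(Fam i))" by blast
    qed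
  qed
  show "\<And>i. i < Suc (Suc n) \<Longrightarrow> D_bounded G (DB + 2*DS + 2*r) (Fam i)" using fam_diam by blast
next
  fix i assume i: "i < Suc (Suc n)"
  show "r_disjoint G r (Fam i)" unfolding r_disjoint_def
  proof (intro ballI impI)
    fix A B x y assume "A \<in> Fam i" "B \<in> Fam i" "A \<noteq> B" "x \<in> A" "y \<in> B"
    then have "\<not> gdist G x y \<le> ereal r"
    proof (cases "i \<le> n")
      case True then show ?thesis using fam_disj_lo \<open>A \<in> Fam i\<close> \<open>B \<in> Fam i\<close> \<open>A \<noteq> B\<close> \<open>x \<in> A\<close> \<open>y \<in> B\<close> by blast
    next
      case False then have "i = Suc n" using i by simp
      then show ?thesis using fam_disj_hi \<open>A \<in> Fam i\<close> \<open>B \<in> Fam i\<close> \<open>A \<noteq> B\<close> \<open>x \<in> A\<close> \<open>y \<in> B\<close> by blast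
    qed
    then show "gdist G x y > ereal r" by simp
  qed
qed

end

definition DSf :: "(nat \<Rightarrow> real \<Rightarrow> real) \<Rightarrow> (real \<Rightarrow> nat) \<Rightarrow> nat \<Rightarrow> real \<Rightarrow> real" where
  "DSf Dfun f n r = Dfun (f (blkW r n + 4*r)) r"
definition DBf :: "(nat \<Rightarrow> real \<Rightarrow> real) \<Rightarrow> (real \<Rightarrow> nat) \<Rightarrow> nat \<Rightarrow> real \<Rightarrow> real" where
  "DBf Dfun f n r = Dfun (f (2*r + 4*(2*r + DSf Dfun f n r))) (2*r + DSf Dfun f n r)"
definition DFf :: "(nat \<Rightarrow> real \<Rightarrow> real) \<Rightarrow> (real \<Rightarrow> nat) \<Rightarrow> nat \<Rightarrow> real \<Rightarrow> real" where
  "DFf Dfun f n r = DBf Dfun f n r + 2 * DSf Dfun f n r + 2*r"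

lemma main_construct:
  fixes C :: "'v wgraph set"
  assumes graphsC: "\<forall>G\<in>C. finite_wgraph G"
    and lw: "layerable_with C Ls f"
    and ctrl: "\<And>i. control_fun_class (Dfun i) n (Ls i)"
  shows "control_fun_class (DFf Dfun f n) (Suc n) C"
  unfolding control_fun_class_def
proof
  fix G assume GC: "G \<in> C"
  have G: "finite_wgraph G" using graphsC GC by blast
  obtain L where L: "real_projection G L"
    and layer: "\<forall>S>0. \<forall>A. inf_S_bounded G L S A \<longrightarrow> induced G A \<in> Ls (f S)"
    using lw GC unfolding layerable_with_def by blast
  have Dpos: "Dfun (f S) \<rho> > 0" if "S > 0" "\<rho> > 0" for S \<rho>
  proof -
    have "inf_S_bounded G L S {}" unfolding inf_S_bounded_def by simp
    then have "induced G {} \<in> Ls (f S)" using layer that by blast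
    then have "control_fun (Dfun (f S)) n (induced G {})" using ctrl unfolding control_fun_class_def by blast
    then show ?thesis using that unfolding control_fun_def by blast
  qed
  show "control_fun (DFf Dfun f n) (Suc n) G"
    unfolding control_fun_def
  proof (intro conjI allI impI)
    fix r :: real assume r: "r > 0"
    define DS where "DS = DSf Dfun f n r"
    define DB where "DB = DBf Dfun f n r"
    have W0: "blkW r n \<ge> 0" using r unfolding blkW_def by simp
    have DSp: "DS > 0" unfolding DS_def DSf_def using Dpos r W0 by simp
    have DBp: "DB > 0" unfolding DB_def DBf_def using Dpos r DSp DS_def by simp
    show "DFf Dfun f n r > 0" unfolding DFf_def using DSp DBp r DS_def DB_def by simp
  next
    fix r :: real assume r: "r > 0"
    define DS where "DS = DSf Dfun f n r"
    define DB where "DB = DBf Dfun f n r"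
    define P where "P = blkP r n"
    define W where "W = blkW r n"
    have W0: "W \<ge> 0" using r unfolding W_def blkW_def by simp
    have PW: "P = W + 2*r" unfolding P_def W_def blkP_def blkW_def by (simp add: algebra_simps)
    have DSp: "DS > 0" unfolding DS_def DSf_def using Dpos r W0 W_def by simp
    have DBp: "DB > 0" unfolding DB_def DBf_def using Dpos r DSp DS_def by simp
    have Rp: "2*r + DS > 0" using r DSp by simp
    define PS where "PS = (\<lambda>k::int. \<lambda>U::nat \<Rightarrow> 'v set set.
      (\<forall>i<Suc n. \<forall>X\<in>U i. X \<subseteq> verts G)
     \<and> (\<forall>x\<in>verts G. real_of_int k * P \<le> L x \<and> L x < real_of_int k * P + W \<longrightarrow> (\<exists>i<Suc n. \<exists>X\<in>U i. x \<in> X))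
     \<and> (\<forall>i<Suc n. \<forall>X\<in>U i. \<forall>Y\<in>U i. X \<noteq> Y \<longrightarrow> (\<forall>x\<in>X. \<forall>y\<in>Y. real_of_int k * P \<le> L x \<and> L x < real_of_int k * P + W \<longrightarrow> \<not> gdist G x y \<le> ereal r))
     \<and> (\<forall>i<Suc n. \<forall>X\<in>U i. \<forall>x\<in>X. \<forall>y\<in>X. gdist G x y \<le> ereal DS))"
    define PB where "PB = (\<lambda>k::int. \<lambda>U::nat \<Rightarrow> 'v set set.
      (\<forall>i<Suc n. \<forall>X\<in>U i. X \<subseteq> verts G)
     \<and> (\<forall>x\<in>verts G. real_of_int k * P + W \<le> L x \<and> L x < real_of_int k * P + P \<longrightarrow> (\<exists>i<Suc n. \<exists>X\<in>U i. x \<in> X))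
     \<and> (\<forall>i<Suc n. \<forall>X\<in>U i. \<forall>Y\<in>U i. X \<noteq> Y \<longrightarrow> (\<forall>x\<in>X. \<forall>y\<in>Y. real_of_int k * P + W \<le> L x \<and> L x < real_of_int k * P + P \<longrightarrow> \<not> gdist G x y \<le> ereal (2*r + DS)))
     \<and> (\<forall>i<Suc n. \<forall>X\<in>U i. \<forall>x\<in>X. \<forall>y\<in>X. gdist G x y \<le> ereal DB))"
    have exS: "\<exists>U. PS k U" for k
    proof -
      have e: "real_of_int k * P + W - real_of_int k * P + 4*r = blkW r n + 4*r" unfolding W_def by simp
      from layer_cover[where Dfun=Dfun and n=n and Ls=Ls and f=f, OF G L layer ctrl, of "real_of_int k * P" "real_of_int k * P + W" r] W0 r
      show ?thesis unfolding PS_def DS_def DSf_def e by simp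
    qed
    have exB: "\<exists>U. PB k U" for k
    proof -
      have e: "real_of_int k * P + P - (real_of_int k * P + W) + 4*(2*r + DS) = 2*r + 4*(2*r + DSf Dfun f n r)"
        unfolding PW DS_def by simp
      from layer_cover[where Dfun=Dfun and n=n and Ls=Ls and f=f, OF G L layer ctrl, of "real_of_int k * P + W" "real_of_int k * P + P" "2*r + DS"] Rp r PW
      show ?thesis unfolding PB_def DB_def DBf_def e by (simp add: DS_def)
    qed
    define US where "US = (\<lambda>k. SOME U. PS k U)"
    define UB where "UB = (\<lambda>k. SOME U. PB k U)"
    have US: "PS k (US k)" for k unfolding US_def using exS by (rule someI_ex)
    have UB: "PB k (UB k)" for k unfolding UB_def using exB by (rule someI_ex)
    have S1: "\<forall>i<Suc n. \<forall>X\<in>US k i. X \<subseteq> verts G" for k using US[of k] unfolding PS_def by (rule conjunct1)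
    have S2: "\<forall>x\<in>verts G. real_of_int k * blkP r n \<le> L x \<and> L x < real_of_int k * blkP r n + blkW r n \<longrightarrow> (\<exists>i<Suc n. \<exists>X\<in>US k i. x \<in> X)" for k
      using US[of k] unfolding PS_def P_def W_def by (elim conjE)
    have S3: "\<forall>i<Suc n. \<forall>X\<in>US k i. \<forall>Y\<in>US k i. X \<noteq> Y \<longrightarrow> (\<forall>x\<in>X. \<forall>y\<in>Y. real_of_int k * blkP r n \<le> L x \<and> L x < real_of_int k * blkP r n + blkW r n \<longrightarrow> \<not> gdist G x y \<le> ereal r)" for k
      using US[of k] unfolding PS_def P_def W_def by (elim conjE)
    have S4: "\<forall>i<Suc n. \<forall>X\<in>US k i. \<forall>x\<in>X. \<forall>y\<in>X. gdist G x y \<le> ereal DS" for k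
      using US[of k] unfolding PS_def by (elim conjE)
    have B1: "\<forall>i<Suc n. \<forall>X\<in>UB k i. X \<subseteq> verts G" for k using UB[of k] unfolding PB_def by (rule conjunct1)
    have B2: "\<forall>x\<in>verts G. real_of_int k * blkP r n + blkW r n \<le> L x \<and> L x < real_of_int k * blkP r n + blkP r n \<longrightarrow> (\<exists>i<Suc n. \<exists>X\<in>UB k i. x \<in> X)" for k
      using UB[of k] unfolding PB_def P_def W_def by (elim conjE)
    have B3: "\<forall>i<Suc n. \<forall>X\<in>UB k i. \<forall>Y\<in>UB k i. X \<noteq> Y \<longrightarrow> (\<forall>x\<in>X. \<forall>y\<in>Y. real_of_int k * blkP r n + blkW r n \<le> L x \<and> L x < real_of_int k * blkP r n + blkP r n \<longrightarrow> \<not> gdist G x y \<le> ereal (2*r + DS))" for k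
      using UB[of k] unfolding PB_def P_def W_def by (elim conjE)
    have B4: "\<forall>i<Suc n. \<forall>X\<in>UB k i. \<forall>x\<in>X. \<forall>y\<in>X. gdist G x y \<le> ereal DB" for k
      using UB[of k] unfolding PB_def by (elim conjE)
    interpret T: twolevel G L r n DS DB US UB
    proof (unfold_locales)
      show "finite_wgraph G" by (rule G)
      show "real_projection G L" by (rule L)
      show "0 < r" by (rule r)
      show "0 \<le> DS" using DSp by simp
      show "0 \<le> DB" using DBp by simp
    next
      fix k i X assume "i < Suc n" "X \<in> US k i" then show "X \<subseteq> verts G" using S1[of k] by simp
    next
      fix k x assume "x \<in> verts G" "real_of_int k * blkP r n \<le> L x" "L x < real_of_int k * blkP r n + blkW r n"
      then show "\<exists>i<Suc n. \<exists>X\<in>US k i. x \<in> X" using S2[of k] by simp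
    next
      fix k i X Y x y assume "i < Suc n" "X \<in> US k i" "Y \<in> US k i" "X \<noteq> Y" "x \<in> X" "y \<in> Y"
        "real_of_int k * blkP r n \<le> L x" "L x < real_of_int k * blkP r n + blkW r n"
      then show "\<not> gdist G x y \<le> ereal r" using S3[of k] by simp
    next
      fix k i X x y assume "i < Suc n" "X \<in> US k i" "x \<in> X" "y \<in> X"
      then show "gdist G x y \<le> ereal DS" using S4[of k] by simp
    next
      fix k i X assume "i < Suc n" "X \<in> UB k i" then show "X \<subseteq> verts G" using B1[of k] by simp
    next
      fix k x assume "x \<in> verts G" "real_of_int k * blkP r n + blkW r n \<le> L x" "L x < real_of_int k * blkP r n + blkP r n"
      then show "\<exists>i<Suc n. \<exists>X\<in>UB k i. x \<in> X" using B2[of k] by simp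
    next
      fix k i X Y x y assume "i < Suc n" "X \<in> UB k i" "Y \<in> UB k i" "X \<noteq> Y" "x \<in> X" "y \<in> Y"
        "real_of_int k * blkP r n + blkW r n \<le> L x" "L x < real_of_int k * blkP r n + blkP r n"
      then show "\<not> gdist G x y \<le> ereal (2*r + DS)" using B3[of k] by simp
    next
      fix k i X x y assume "i < Suc n" "X \<in> UB k i" "x \<in> X" "y \<in> X"
      then show "gdist G x y \<le> ereal DB" using B4[of k] by simp
    qed
    have eq: "DFf Dfun f n r = DB + 2*DS + 2*r" unfolding DFf_def DS_def DB_def by simp
    show "\<exists>U. (\<forall>i<Suc (Suc n). \<forall>X\<in>U i. X \<subseteq> verts G) \<and>
        (\<Union>i<Suc (Suc n). \<Union>(U i)) = verts G \<and>
        (\<forall>i<Suc (Suc n). r_disjoint G r (U i)) \<and>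
        (\<forall>i<Suc (Suc n). D_bounded G (DFf Dfun f n r) (U i))"
      unfolding eq by (rule T.fam_ok)
  qed
qed

lemma coef_bound:
  fixes a t N :: real
  assumes a: "a \<ge> 1" and t: "t \<ge> 1" and N: "N \<ge> 0"
  shows "(a+4*t)*(2 + (a + t*(2*N+6))) + 2*t + 2*(a + t*(2*N+6)) + 2 \<le> 20*(6*(a+2*t)^2 + (a+2*t)*t*(N+4))"
proof -
  have h1: "a*a \<ge> a" using mult_right_mono[of 1 a a] a by simp
  have h2: "t*t \<ge> t" using mult_right_mono[of 1 t t] t by simp
  have tN: "t*N \<ge> 0" using t N by simp
  have h3: "t*(t*N) \<ge> t*N" using mult_right_mono[of 1 t "t*N"] t tN by simp
  have h4: "a*(t*N) \<ge> 0" using a tN by simp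
  have h5: "a*t \<ge> 0" using a t by simp
  have "(a+4*t)*(2 + (a + t*(2*N+6))) + 2*t + 2*(a + t*(2*N+6)) + 2
        = a*a + 2*(a*(t*N)) + 10*(a*t) + 4*a + 8*(t*(t*N)) + 24*(t*t) + 22*t + 4*(t*N) + 2"
    by (simp add: algebra_simps)
  moreover have "20*(6*(a+2*t)^2 + (a+2*t)*t*(N+4)) = 120*(a*a) + 560*(a*t) + 640*(t*t) + 20*(a*(t*N)) + 40*(t*(t*N))"
    by (simp add: algebra_simps power2_eq_square)
  ultimately show ?thesis using h1 h2 h3 h4 h5 a t tN by linarith
qed

lemma DF_bound:
  fixes a b c d r :: real
  assumes a: "a \<ge> 1" and b: "b \<ge> 1" and c: "c \<ge> 1" and d: "d \<ge> 0" and r: "r > 0"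
    and fc: "\<forall>S>0. real (f S) \<le> c * S"
    and Db: "\<forall>i. \<forall>r>0. Dfun i r \<le> a * r + b * real i + d"
    and Dp: "\<forall>S>0. \<forall>\<rho>>0. Dfun (f S) \<rho> > 0"
  shows "DFf Dfun f n r \<le> ((a+4*(b*c))*(2 + (a + (b*c)*(2*real n+6))) + 2*(b*c) + 2*(a + (b*c)*(2*real n + 6)) + 2) * r
            + (a + 4*(b*c) + 3)*d"
proof -
  define \<sigma> where "\<sigma> = a + (b*c)*(2*real n+6)"
  define S1 where "S1 = blkW r n + 4*r"
  have S1e: "S1 = (2*real n + 6) * r" unfolding S1_def blkW_def by (simp add: algebra_simps)
  have S1p: "S1 > 0" using r S1e by simp
  define DS where "DS = DSf Dfun f n r"
  have DSe: "DS = Dfun (f S1) r" unfolding DS_def DSf_def S1_def ..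
  have "b * real (f S1) \<le> b * (c * S1)" using fc S1p b by (intro mult_left_mono) auto
  then have DSb: "DS \<le> \<sigma> * r + d" using Db r unfolding DSe \<sigma>_def S1e
    by (smt (verit) mult.assoc mult.commute distrib_right)
  have DSp: "DS > 0" using Dp S1p r unfolding DSe by blast
  define R where "R = 2*r + DS"
  have Rp: "R > 0" using r DSp R_def by simp
  define S2 where "S2 = 2*r + 4*R"
  have S2p: "S2 > 0" using r Rp S2_def by simp
  define DB where "DB = DBf Dfun f n r"
  have DBe: "DB = Dfun (f S2) R" unfolding DB_def DBf_def S2_def R_def DS_def ..
  have "b * real (f S2) \<le> b * (c * S2)" using fc S2p b by (intro mult_left_mono) auto
  then have DBb: "DB \<le> (a + 4*(b*c)) * R + 2*(b*c)*r + d" using Db Rp unfolding DBe S2_def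
    by (smt (verit) mult.assoc mult.commute distrib_left distrib_right)
  have Rb: "R \<le> (2 + \<sigma>) * r + d" using DSb R_def by (simp add: algebra_simps)
  have k0: "a + 4*(b*c) \<ge> 0" using a b c by (simp add: add_nonneg_nonneg)
  have mono: "(a + 4*(b*c)) * R \<le> (a + 4*(b*c)) * ((2 + \<sigma>) * r + d)" using Rb k0 by (rule mult_left_mono)
  have eqD: "DFf Dfun f n r = DB + 2*DS + 2*r" unfolding DFf_def DB_def DS_def ..
  have eqR: "((a+4*(b*c))*(2 + \<sigma>) + 2*(b*c) + 2*\<sigma> + 2) * r + (a + 4*(b*c) + 3)*d
      = (a + 4*(b*c)) * ((2 + \<sigma>) * r + d) + 2*(b*c)*r + d + 2*(\<sigma>*r + d) + 2*r"
    by (simp add: algebra_simps)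
  have key: "DB + 2*DS + 2*r \<le> Q' + E + d + 2*(\<sigma>*r+d) + 2*r" if "DB \<le> Q + E + d" "Q \<le> Q'" for Q Q' E
  proof -
    have "2*DS \<le> 2*(\<sigma>*r+d)" using DSb by simp
    then show ?thesis using that by linarith
  qed
  have "DB + 2*DS + 2*r \<le> (a + 4*(b*c)) * ((2 + \<sigma>) * r + d) + 2*(b*c)*r + d + 2*(\<sigma>*r + d) + 2*r"
    by (rule key[OF DBb mono])
  then have "DFf Dfun f n r \<le> ((a+4*(b*c))*(2 + \<sigma>) + 2*(b*c) + 2*\<sigma> + 2) * r + (a + 4*(b*c) + 3)*d"
    unfolding eqD eqR .
  then show ?thesis unfolding \<sigma>_def .
qed

lemma Dpos_lemma:
  assumes GC: "G \<in> C" and lw: "layerable_with C Ls f" and ctrl: "\<And>i. control_fun_class (Dfun i) n (Ls i)"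
  shows "\<forall>S>0. \<forall>\<rho>>0. Dfun (f S) \<rho> > 0"
proof (intro allI impI)
  fix S \<rho> :: real assume S: "S > 0" and rho: "\<rho> > 0"
  obtain L where layer: "\<forall>S>0. \<forall>A. inf_S_bounded G L S A \<longrightarrow> induced G A \<in> Ls (f S)"
    using lw GC unfolding layerable_with_def by blast
  have "inf_S_bounded G L S {}" unfolding inf_S_bounded_def by simp
  then have "induced G {} \<in> Ls (f S)" using layer S by blast
  then have "control_fun (Dfun (f S)) n (induced G {})" using ctrl unfolding control_fun_class_def by blast
  then show "Dfun (f S) \<rho> > 0" using rho unfolding control_fun_def by blast
qed

theorem theorem2p6:
  fixes n :: nat and Ls :: "nat \<Rightarrow> 'v wgraph set" and C :: "'v wgraph set"
  assumes graphsL: "\<And>i. \<forall>G\<in>Ls i. finite_wgraph G"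
    and graphsC: "\<forall>G\<in>C. finite_wgraph G"
    and monoL: "\<And>i. Ls i \<subseteq> Ls (Suc i)"
    and dimL: "\<And>i. asdim_le (Ls i) n"
    and lay: "layerable C Ls"
  shows "asdim_le C (Suc n) \<and>
    (\<forall>a b c d. a \<ge> 1 \<and> b \<ge> 1 \<and> c \<ge> 1 \<and> d \<ge> 0 \<and> linearly_layerable c C Ls \<and>
       (\<forall>i. \<exists>Di. control_fun_class Di n (Ls i) \<and> (\<forall>r>0. Di r \<le> a * r + b * real i + d))
     \<longrightarrow> asdim_le_linear C (Suc n) \<and>
         (d = 0 \<longrightarrow> ANdim_le C (Suc n) \<and>
            (\<exists>DC. control_fun_class DC (Suc n) C \<and>
               (\<forall>r>0. DC r \<le> 20 * (6 * (a + 2*b*c)^2 + (a + 2*b*c) * b * c * (real n + 4)) * r))))"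
proof (intro conjI allI impI)
  obtain f where lw: "layerable_with C Ls f" using lay unfolding layerable_def by blast
  have "\<forall>i. \<exists>D. control_fun_class D n (Ls i)" using dimL unfolding asdim_le_def by blast
  then obtain Dfun where ctrl: "\<And>i. control_fun_class (Dfun i) n (Ls i)" by metis
  show "asdim_le C (Suc n)" unfolding asdim_le_def using main_construct[OF graphsC lw ctrl] by blast
next
  fix a b c d :: real
  assume h: "a \<ge> 1 \<and> b \<ge> 1 \<and> c \<ge> 1 \<and> d \<ge> 0 \<and> linearly_layerable c C Ls \<and>
       (\<forall>i. \<exists>Di. control_fun_class Di n (Ls i) \<and> (\<forall>r>0. Di r \<le> a * r + b * real i + d))"
  then have a: "a \<ge> 1" and b: "b \<ge> 1" and c: "c \<ge> 1" and d: "d \<ge> 0" and ll: "linearly_layerable c C Ls"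
    and hD: "\<forall>i. \<exists>Di. control_fun_class Di n (Ls i) \<and> (\<forall>r>0. Di r \<le> a * r + b * real i + d)" by auto
  obtain f where lw: "layerable_with C Ls f" and fc: "\<forall>S>0. real (f S) \<le> c * S"
    using ll unfolding linearly_layerable_def by blast
  obtain Dfun where hD': "\<And>i. control_fun_class (Dfun i) n (Ls i) \<and> (\<forall>r>0. Dfun i r \<le> a * r + b * real i + d)"
    using hD by metis
  have ctrl: "\<And>i. control_fun_class (Dfun i) n (Ls i)" using hD' by blast
  have Db: "\<forall>i. \<forall>r>0. Dfun i r \<le> a * r + b * real i + d" using hD' by blast
  define DC where "DC = DFf Dfun f n"
  have cf: "control_fun_class DC (Suc n) C" unfolding DC_def by (rule main_construct[OF graphsC lw ctrl])
  define \<alpha> where "\<alpha> = (a+4*(b*c))*(2 + (a + (b*c)*(2*real n+6))) + 2*(b*c) + 2*(a + (b*c)*(2*real n + 6)) + 2"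
  define \<beta> where "\<beta> = (a + 4*(b*c) + 3)*d"
  define T where "T = 20 * (6 * (a + 2*b*c)^2 + (a + 2*b*c) * b * c * (real n + 4))"
  have bc: "b*c \<ge> 1" using b c by (metis mult_mono' mult_1 zero_le_one order_trans)
  have al0: "\<alpha> \<ge> 0" unfolding \<alpha>_def using a bc by (simp add: add_nonneg_nonneg)
  have be0: "\<beta> \<ge> 0" unfolding \<beta>_def using a bc d by simp
  have aT: "\<alpha> \<le> T"
  proof -
    have "\<alpha> \<le> 20*(6*(a+2*(b*c))^2 + (a+2*(b*c))*(b*c)*(real n+4))"
      unfolding \<alpha>_def using coef_bound[OF a bc, of "real n"] by simp
    also have "\<dots> = T" unfolding T_def by (simp add: mult.assoc)
    finally show ?thesis .
  qed
  have bound: "C \<noteq> {} \<Longrightarrow> \<forall>r>0. DC r \<le> \<alpha> * r + \<beta>"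
  proof (intro allI impI)
    fix r :: real assume "C \<noteq> {}" "r > 0"
    then obtain G where "G \<in> C" by blast
    from Dpos_lemma[OF this lw ctrl] have Dp: "\<forall>S>0. \<forall>\<rho>>0. Dfun (f S) \<rho> > 0" .
    show "DC r \<le> \<alpha> * r + \<beta>" unfolding DC_def \<alpha>_def \<beta>_def
      by (rule DF_bound[OF a b c d \<open>r > 0\<close> fc Db Dp])
  qed
  show "asdim_le_linear C (Suc n)"
  proof (cases "C = {}")
    case True
    then show ?thesis unfolding asdim_le_linear_def control_fun_class_def
      by (intro exI[of _ "\<lambda>r. r"] exI[of _ 1]) auto
  next
    case False
    have "\<forall>r>0. DC r \<le> (\<alpha> + \<beta>) * r + (\<alpha> + \<beta>)"
    proof (intro allI impI)
      fix r :: real assume r: "r > 0"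
      have "\<beta> * r \<ge> 0" using be0 r by simp
      moreover have h: "DC r \<le> \<alpha>*r + \<beta>" using bound[OF False] r by blast
      moreover have "(\<alpha>+\<beta>)*r + (\<alpha>+\<beta>) = \<alpha>*r + \<beta> + (\<beta>*r + \<alpha>)" by (simp add: algebra_simps)
      ultimately show "DC r \<le> (\<alpha> + \<beta>) * r + (\<alpha> + \<beta>)" using al0 by linarith
    qed
    then show ?thesis unfolding asdim_le_linear_def using cf by blast
  qed
  assume d0: "d = 0"
  have be: "\<beta> = 0" unfolding \<beta>_def d0 by simp
  have DCT: "C \<noteq> {} \<Longrightarrow> \<forall>r>0. DC r \<le> T * r"
  proof (intro allI impI)
    fix r :: real assume "C \<noteq> {}" "r > 0"
    then have "DC r \<le> \<alpha> * r" using bound be by simp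
    also have "\<alpha> * r \<le> T * r" using aT \<open>r > 0\<close> by (simp add: mult_right_mono)
    finally show "DC r \<le> T * r" .
  qed
  show "ANdim_le C (Suc n)"
  proof (cases "C = {}")
    case True
    then show ?thesis unfolding ANdim_le_def control_fun_class_def
      by (intro exI[of _ "\<lambda>r. r"] exI[of _ 1]) auto
  next
    case False
    then show ?thesis unfolding ANdim_le_def using cf DCT by blast
  qed
  show "\<exists>DC. control_fun_class DC (Suc n) C \<and>
               (\<forall>r>0. DC r \<le> 20 * (6 * (a + 2*b*c)^2 + (a + 2*b*c) * b * c * (real n + 4)) * r)"
  proof (cases "C = {}")
    case True
    then show ?thesis unfolding control_fun_class_def by auto
  next
    case False
    then show ?thesis using cf DCT unfolding T_def by blast
  qed
qed


end
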